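(* Let $i\geq1$, let $T$ be an SSRT of partition shape $\lambda$ such that $\lambda$ has an addable node in column $i+1$, and let $f_{i+1}(T)=T_{(r,i)}$. Define $T'$ by $T'_{(p,q)}=T_{(p,q)}$ if $q\neq i$; $T'_{(p,i)}=T_{(p,i)}$ if $p<r$; and $T'_{(p,i)}=T_{(p+1,i)}$ if $p\geq r$ (for those $p$ with $(p+1,i)\in\lambda$). Then $T'$ is an SSRT.
   Context: SSRTs (French convention: rows numbered bottom to top, $(p,q)$ = row $p$, column $q$): fillings of a partition shape with positive integers weakly decreasing along rows left to right and strictly decreasing along columns bottom to top. With $T_{(p,q)}=0$ for $(p,q)\notin\lambda$ and $T_{(0,q)}=\infty$, $f_{i+1}(T)$ is the entry $T_{(r,i)}$ where $r$ is the largest integer with $(r,i)\in\lambda$ and $T_{(r,i)}<T_{(r-1,i+1)}$; this is the first entry that moves horizontally in the backward jeu de taquin slide started at the addable node in column $i+1$ (at each step the empty box at $(p,q)$ is filled from whichever of $(p-1,q)$, $(p,q-1)$ holds the smaller entry, ties going to $(p-1,q)$). Thus $T'$ is obtained by removing $T_{(r,i)}$ and sliding the entries above it in column $i$ down one row. *)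

theory Defs
  imports Main "HOL-Library.Extended_Nat"
begin

text \<open>Cells are pairs (p,q) = (row p, column q), rows numbered bottom to top
  (French convention), rows and columns numbered from 1.\<close>

definition partition_shape :: "(nat \<times> nat) set \<Rightarrow> bool" where
  "partition_shape lam \<longleftrightarrow> finite lam \<and>
     (\<forall>p q. (p, q) \<in> lam \<longrightarrow> p \<ge> 1 \<and> q \<ge> 1) \<and>
     (\<forall>p q p' q'. (p, q) \<in> lam \<longrightarrow> 1 \<le> p' \<longrightarrow> p' \<le> p \<longrightarrow> 1 \<le> q' \<longrightarrow> q' \<le> q
        \<longrightarrow> (p', q') \<in> lam)"

definition addable :: "(nat \<times> nat) set \<Rightarrow> nat \<times> nat \<Rightarrow> bool" where
  "addable lam c \<longleftrightarrow> c \<notin> lam \<and> fst c \<ge> 1 \<and> snd c \<ge> 1 \<and> partition_shape (insert c lam)"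

definition is_SSRT :: "(nat \<times> nat) set \<Rightarrow> (nat \<times> nat \<Rightarrow> nat) \<Rightarrow> bool" where
  "is_SSRT lam T \<longleftrightarrow> partition_shape lam \<and>
     (\<forall>c \<in> lam. T c > 0) \<and>
     (\<forall>p q. (p, q) \<in> lam \<longrightarrow> (p, q + 1) \<in> lam \<longrightarrow> T (p, q) \<ge> T (p, q + 1)) \<and>
     (\<forall>p q. (p, q) \<in> lam \<longrightarrow> (p + 1, q) \<in> lam \<longrightarrow> T (p, q) > T (p + 1, q))"

definition ext_entry :: "(nat \<times> nat) set \<Rightarrow> (nat \<times> nat \<Rightarrow> nat) \<Rightarrow> nat \<times> nat \<Rightarrow> enat" where
  "ext_entry lam T c = (if fst c = 0 then \<infinity> else if c \<in> lam then enat (T c) else 0)"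

text \<open>The row r with f_{i+1}(T) = T_(r,i): the largest r with (r,i) in lam and
  T_(r,i) < T_(r-1,i+1).\<close>
definition f_row :: "(nat \<times> nat) set \<Rightarrow> (nat \<times> nat \<Rightarrow> nat) \<Rightarrow> nat \<Rightarrow> nat" where
  "f_row lam T i = (GREATEST r. (r, i) \<in> lam \<and>
       ext_entry lam T (r, i) < ext_entry lam T (r - 1, i + 1))"

definition f_op :: "(nat \<times> nat) set \<Rightarrow> (nat \<times> nat \<Rightarrow> nat) \<Rightarrow> nat \<Rightarrow> nat" where
  "f_op lam T i = T (f_row lam T i, i)"

text \<open>The tableau T' (and its shape): remove T_(r,i), slide the entries above it in
  column i down one row.\<close>
definition remove_shape :: "(nat \<times> nat) set \<Rightarrow> nat \<Rightarrow> (nat \<times> nat) set" where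
  "remove_shape lam i = {(p, q) \<in> lam. q \<noteq> i \<or> (p + 1, i) \<in> lam}"

definition remove_tab :: "(nat \<times> nat \<Rightarrow> nat) \<Rightarrow> nat \<Rightarrow> nat \<Rightarrow> nat \<times> nat \<Rightarrow> nat" where
  "remove_tab T i r = (\<lambda>(p, q). if q \<noteq> i then T (p, q)
                                else if p < r then T (p, i) else T (p + 1, i))"

end

theory Submission
  imports Defs
begin

lemma ps_dc: assumes "partition_shape lam" "(p,q)\<in>lam" "1\<le>p'" "p'\<le>p" "1\<le>q'" "q'\<le>q"
  shows "(p',q')\<in>lam"
proof -
  have H: "\<forall>p q p' q'. (p, q) \<in> lam \<longrightarrow> 1 \<le> p' \<longrightarrow> p' \<le> p \<longrightarrow> 1 \<le> q' \<longrightarrow> q' \<le> q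
        \<longrightarrow> (p', q') \<in> lam" using assms(1) unfolding partition_shape_def by (elim conjE)
  show ?thesis using H assms(2-) by blast
qed
lemma ps_ge1: assumes "partition_shape lam" "(p,q)\<in>lam" shows "p \<ge> 1 \<and> q \<ge> 1"
proof -
  have H: "\<forall>p q. (p, q) \<in> lam \<longrightarrow> p \<ge> 1 \<and> q \<ge> 1" using assms(1) unfolding partition_shape_def by (elim conjE)
  show ?thesis using H assms(2) by blast
qed
lemma ps_fin: "partition_shape lam \<Longrightarrow> finite lam" unfolding partition_shape_def by (elim conjE)

lemma colA:
  assumes "i \<ge> 1" "partition_shape lam" "\<exists>a. addable lam (a, i + 1)" "(p, i+1) \<in> lam"
  shows "(p+1, i) \<in> lam"
proof -
  obtain a where a: "addable lam (a, i+1)" using assms(3) by blast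
  hence a1: "a \<ge> 1" "(a,i+1) \<notin> lam" and ps: "partition_shape (insert (a,i+1) lam)"
    unfolding addable_def by simp_all
  have "p + 1 \<le> a"
  proof (rule ccontr)
    assume "\<not> p + 1 \<le> a"
    hence "(a, i+1) \<in> lam" using ps_dc[OF assms(2) assms(4), of a "i+1"] a1 by simp
    thus False using a1 by simp
  qed
  hence "(p+1, i) \<in> insert (a,i+1) lam" using ps_dc[OF ps, of a "i+1" "p+1" i] assms(1) by simp
  thus ?thesis by auto
qed

theorem lemma6p1:
  fixes lam :: "(nat \<times> nat) set" and T :: "nat \<times> nat \<Rightarrow> nat" and i r :: nat
  assumes "i \<ge> 1"
    and "is_SSRT lam T"
    and "\<exists>p. addable lam (p, i + 1)"
    and "r = f_row lam T i"
  shows "is_SSRT (remove_shape lam i) (remove_tab T i r)"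
proof -
  have ps: "partition_shape lam" using assms(2) by (simp add: is_SSRT_def)
  have pos: "\<And>c. c \<in> lam \<Longrightarrow> T c > 0" using assms(2) by (simp add: is_SSRT_def)
  have rowT: "\<And>p q. (p, q) \<in> lam \<Longrightarrow> (p, q + 1) \<in> lam \<Longrightarrow> T (p, q) \<ge> T (p, q + 1)"
    using assms(2) by (simp add: is_SSRT_def)
  have colT: "\<And>p q. (p, q) \<in> lam \<Longrightarrow> (p + 1, q) \<in> lam \<Longrightarrow> T (p, q) > T (p + 1, q)"
    using assms(2) by (simp add: is_SSRT_def)
  have fin: "finite lam" using ps ps_fin by blast
  have ge1: "\<And>p q. (p,q) \<in> lam \<Longrightarrow> p \<ge> 1 \<and> q \<ge> 1" using ps ps_ge1 by blast
  have dc: "\<And>p q p' q'. (p, q) \<in> lam \<Longrightarrow> 1 \<le> p' \<Longrightarrow> p' \<le> p \<Longrightarrow> 1 \<le> q' \<Longrightarrow> q' \<le> q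
        \<Longrightarrow> (p', q') \<in> lam" using ps ps_dc by blast
  have A: "\<And>p. (p, i+1) \<in> lam \<Longrightarrow> (p+1, i) \<in> lam" using colA assms(1,3) ps by blast
  define P where "P = (\<lambda>r. (r, i) \<in> lam \<and>
       ext_entry lam T (r, i) < ext_entry lam T (r - 1, i + 1))"
  have rdef: "r = Greatest P" using assms(4) by (simp add: f_row_def P_def)
  obtain b where b: "\<forall>x\<in>fst ` lam. x \<le> b" using fin
    by (meson finite_imageI finite_nat_set_iff_bounded_le)
  have bnd: "\<forall>y. P y \<longrightarrow> y \<le> b"
  proof (intro allI impI)
    fix y assume "P y"
    hence "(y, i) \<in> lam" unfolding P_def by simp
    hence "y \<in> fst ` lam" by (metis fst_conv image_eqI)
    thus "y \<le> b" using b by blast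
  qed
  have key: "\<And>p. p \<ge> r \<Longrightarrow> (p, i+1) \<in> lam \<Longrightarrow> (p+1, i) \<in> lam \<Longrightarrow> T (p, i+1) \<le> T (p+1, i)"
  proof (rule ccontr)
    fix p assume h: "p \<ge> r" "(p, i+1) \<in> lam" "(p+1, i) \<in> lam" "\<not> T (p, i+1) \<le> T (p+1, i)"
    have "P (p+1)" using h unfolding P_def ext_entry_def by auto
    hence "p + 1 \<le> r" using Greatest_le_nat[of P "p+1" b] bnd rdef by blast
    thus False using h by simp
  qed
  have mem: "\<And>p q. (p,q) \<in> remove_shape lam i \<longleftrightarrow> (p, q) \<in> lam \<and> (q \<noteq> i \<or> (p + 1, i) \<in> lam)"
    by (simp add: remove_shape_def)
  have shape: "partition_shape (remove_shape lam i)"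
    unfolding partition_shape_def
  proof (intro conjI allI impI)
    show "finite (remove_shape lam i)"
      by (rule finite_subset[OF _ fin]) (auto simp: remove_shape_def)
  next
    fix p q assume "(p, q) \<in> remove_shape lam i"
    thus "1 \<le> p" using ge1 mem by blast
  next
    fix p q assume "(p, q) \<in> remove_shape lam i"
    thus "1 \<le> q" using ge1 mem by blast
  next
    fix p q p' q'
    assume h: "(p, q) \<in> remove_shape lam i"
      "1 \<le> p'" "p' \<le> p" "1 \<le> q'" "q' \<le> q"
    have h1: "(p, q) \<in> lam" "q \<noteq> i \<or> (p + 1, i) \<in> lam" using h(1) mem by blast+
    have l: "(p', q') \<in> lam" using h h1 dc by blast
    show "(p', q') \<in> remove_shape lam i"
    proof (cases "q' = i")
      case True
      have "(p+1, i) \<in> lam"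
      proof (cases "q = i")
        case True thus ?thesis using h1 by auto
      next
        case False
        hence "q \<ge> i+1" using h True by simp
        hence "(p, i+1) \<in> lam" using h h1 dc[of p q p "i+1"] by auto
        thus ?thesis using A by blast
      qed
      hence "(p'+1, i) \<in> lam" using dc[of "p+1" i "p'+1" i] h assms(1) by auto
      thus ?thesis using l True mem by blast
    next
      case False thus ?thesis using l mem by blast
    qed
  qed
  show ?thesis unfolding is_SSRT_def
  proof (intro conjI allI impI ballI)
    show "partition_shape (remove_shape lam i)" by (rule shape)
  next
    fix c assume "c \<in> remove_shape lam i"
    thus "0 < remove_tab T i r c"
      by (cases c) (auto simp: remove_shape_def remove_tab_def intro: pos)
  next
    fix p q assume h: "(p, q) \<in> remove_shape lam i" "(p, q + 1) \<in> remove_shape lam i"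
    show "remove_tab T i r (p, q + 1) \<le> remove_tab T i r (p, q)"
    proof (cases "q = i")
      case True
      show ?thesis
      proof (cases "p < r")
        case True thus ?thesis using h \<open>q = i\<close> rowT by (auto simp: remove_shape_def remove_tab_def)
      next
        case False thus ?thesis using h \<open>q = i\<close> key[of p]
          by (auto simp: remove_shape_def remove_tab_def)
      qed
    next
      case qi: False
      show ?thesis
      proof (cases "q + 1 = i")
        case True
        show ?thesis
        proof (cases "p < r")
          case True thus ?thesis using h \<open>q+1 = i\<close> rowT by (auto simp: remove_shape_def remove_tab_def)
        next
          case False
          have l1: "(p, q) \<in> lam" "(p+1, i) \<in> lam" using h \<open>q+1 = i\<close> by (auto simp: remove_shape_def)
          have l2: "(p, i) \<in> lam" using dc[OF l1(2), of p i] ge1[OF l1(1)] assms(1) by auto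
          have "T (p, q) \<ge> T (p, i)" using rowT[OF l1(1)] l2 \<open>q+1 = i\<close> by auto
          moreover have "T (p, i) > T (p+1, i)" using colT l1 l2 by blast
          ultimately show ?thesis using False \<open>q+1 = i\<close> qi by (auto simp: remove_tab_def)
        qed
      next
        case False thus ?thesis using h qi rowT by (auto simp: remove_shape_def remove_tab_def)
      qed
    qed
  next
    fix p q assume h: "(p, q) \<in> remove_shape lam i" "(p + 1, q) \<in> remove_shape lam i"
    show "remove_tab T i r (p + 1, q) < remove_tab T i r (p, q)"
    proof (cases "q = i")
      case False thus ?thesis using h colT by (auto simp: remove_shape_def remove_tab_def)
    next
      case True
      have l: "(p+1, i) \<in> lam" "(p+2, i) \<in> lam" "(p,i) \<in> lam" using h True
        by (auto simp: remove_shape_def)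
      have c1: "T (p, i) > T (p+1, i)" using colT l by blast
      have c2: "T (p+1, i) > T (p+2, i)" using colT[of "p+1" i] l by auto
      show ?thesis using True c1 c2 by (auto simp: remove_tab_def)
    qed
  qed
qed

end
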